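(* Let $f:\mathbb{R}^d\to\mathbb{R}$ be differentiable with minimum value $f^\ast$; let $L>0,\mu>0,\rho\ge1$. Assume (L-smooth) $f(x)-f(y)-\langle\nabla f(y),x-y\rangle\le\frac{L}{2}\|x-y\|^2$ for all $x,y$; (PL) $\|\nabla f(x)\|^2\ge2\mu(f(x)-f^\ast)$ for all $x$; (SGC) $\mathbb{E}_\xi[\nabla f(x,\xi)]=\nabla f(x)$ and $\mathbb{E}_\xi[\|\nabla f(x,\xi)\|^2]\le\rho\|\nabla f(x)\|^2$ for all $x$. Run the continuized Nesterov algorithm (see context) with $0<\gamma\le\frac{1}{\rho L}$, $\gamma'=\gamma+\sqrt{\frac{\gamma}{2\rho}}$, $\eta=\sqrt{\frac{\gamma}{2\rho}}$, $\eta'=\frac{\mu\gamma}{2}-\sqrt{\frac{\gamma}{2\rho}}$. Then for every $k\in\mathbb{N}$, $$\mathbb{E}\big[e^{\frac{\mu\gamma}{2}T_k}(f(\tilde x_k)-f^\ast)\big]\le f(x_0)-f^\ast.$$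
   Context: Stochastic gradients: $(\Xi,\mathcal{P})$ is a probability space and $\nabla f(x,\xi)$ is a measurable stochastic estimate of $\nabla f(x)$; $\mathbb{E}_\xi$ denotes integration in $\xi\sim\mathcal{P}$. Continuized Nesterov algorithm with parameters $(\eta,\eta',\gamma,\gamma')$, $\eta+\eta'>0$: let $T_0=0$ and $T_{k+1}-T_k$, $k\ge0$, i.i.d. exponential with parameter $1$; let $\xi_1,\xi_2,\dots$ be i.i.d. with law $\mathcal{P}$, independent of the $T_k$. Given deterministic $x_0$, set $\tilde x_0=\tilde z_0=x_0$ and, with $\Delta_k=T_{k+1}-T_k$, for $k\ge0$: $\tilde y_k=\tilde x_k+\frac{\eta}{\eta+\eta'}(1-e^{-(\eta+\eta')\Delta_k})(\tilde z_k-\tilde x_k)$, $\tilde x_{k+1}=\tilde y_k-\gamma\nabla f(\tilde y_k,\xi_{k+1})$, $\tilde z_{k+1}=\tilde z_k+\eta'\frac{1-e^{-(\eta+\eta')\Delta_k}}{\eta'+\eta e^{-(\eta+\eta')\Delta_k}}(\tilde y_k-\tilde z_k)-\gamma'\nabla f(\tilde y_k,\xi_{k+1})$. ($\tilde x_k$ coincides with the value $x_{T_k}$ of the associated continuized Nesterov process at the random time $T_k$.) *)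

theory Defs
  imports "HOL-Probability.Probability"
begin

text \<open>Sample space of the continuized Nesterov algorithm: a point
  omega :: nat => real * 'b encodes, for each k, the pair
  (Delta_k, xi_(k+1)) = (T_(k+1) - T_k, xi_(k+1)).\<close>

definition cn_law :: "'b measure \<Rightarrow> (nat \<Rightarrow> real \<times> 'b) measure" where
  "cn_law P = (\<Pi>\<^sub>M k\<in>UNIV. (density lborel (exponential_density 1) \<Otimes>\<^sub>M P))"

definition cn_T :: "(nat \<Rightarrow> real \<times> 'b) \<Rightarrow> nat \<Rightarrow> real" where
  "cn_T \<omega> k = (\<Sum>i<k. fst (\<omega> i))"

text \<open>The iterates (x~_k, z~_k); g x xi is the stochastic gradient.\<close>
primrec cn_iter :: "real \<Rightarrow> real \<Rightarrow> real \<Rightarrow> real \<Rightarrow> ('a::real_vector \<Rightarrow> 'b \<Rightarrow> 'a)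
    \<Rightarrow> 'a \<Rightarrow> (nat \<Rightarrow> real \<times> 'b) \<Rightarrow> nat \<Rightarrow> 'a \<times> 'a" where
  "cn_iter \<eta> \<eta>' \<gamma> \<gamma>' g x0 \<omega> 0 = (x0, x0)"
| "cn_iter \<eta> \<eta>' \<gamma> \<gamma>' g x0 \<omega> (Suc k) =
     (let x = fst (cn_iter \<eta> \<eta>' \<gamma> \<gamma>' g x0 \<omega> k);
          z = snd (cn_iter \<eta> \<eta>' \<gamma> \<gamma>' g x0 \<omega> k);
          \<Delta> = fst (\<omega> k); \<xi> = snd (\<omega> k);
          e = exp (- (\<eta> + \<eta>') * \<Delta>);
          y = x + (\<eta> / (\<eta> + \<eta>') * (1 - e)) *\<^sub>R (z - x);
          G = g y \<xi>
      in (y - \<gamma> *\<^sub>R G,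
          z + (\<eta>' * (1 - e) / (\<eta>' + \<eta> * e)) *\<^sub>R (y - z) - \<gamma>' *\<^sub>R G))"

end

theory Submission
  imports Defs
begin
locale cnl = P: prob_space P for P :: "'b measure" +
  fixes f :: "'a::euclidean_space \<Rightarrow> real" and grad :: "'a \<Rightarrow> 'a"
    and g :: "'a \<Rightarrow> 'b \<Rightarrow> 'a"
    and fstar L \<mu> \<rho> \<gamma> \<eta> \<eta>' \<gamma>' \<theta> :: real
  assumes deriv: "\<And>x. (f has_derivative (\<lambda>h. grad x \<bullet> h)) (at x)"
    and fmin: "\<And>x. fstar \<le> f x"
    and L: "L > 0" and mu: "\<mu> > 0" and rho: "\<rho> \<ge> 1"
    and smooth: "\<And>x y. f x - f y - grad y \<bullet> (x - y) \<le> L / 2 * (norm (x - y))\<^sup>2"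
    and PL: "\<And>x. (norm (grad x))\<^sup>2 \<ge> 2 * \<mu> * (f x - fstar)"
    and g_meas: "(\<lambda>(x, \<xi>). g x \<xi>) \<in> borel_measurable (borel \<Otimes>\<^sub>M P)"
    and unbiased: "\<And>x. integrable P (g x) \<and> (\<integral>\<xi>. g x \<xi> \<partial>P) = grad x"
    and SGC: "\<And>x. (\<integral>\<^sup>+\<xi>. ennreal ((norm (g x \<xi>))\<^sup>2) \<partial>P) \<le> ennreal (\<rho> * (norm (grad x))\<^sup>2)"
    and gamma: "0 < \<gamma>" "\<gamma> \<le> 1 / (\<rho> * L)"
    and eta_eq: "\<eta> = sqrt (\<gamma> / (2 * \<rho>))"
    and eta'_eq: "\<eta>' = \<mu> * \<gamma> / 2 - sqrt (\<gamma> / (2 * \<rho>))"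
    and gamma'_eq: "\<gamma>' = \<gamma> + sqrt (\<gamma> / (2 * \<rho>))"
    and theta_eq: "\<theta> = \<mu> * \<gamma> / 2"
begin

lemma f_cont: "continuous_on UNIV f"
  using deriv by (meson continuous_at_imp_continuous_on has_derivative_continuous)

lemma f_borel[measurable]: "f \<in> borel_measurable borel"
  by (rule borel_measurable_continuous_onI[OF f_cont])

lemma g_meas1[measurable]: "(\<lambda>\<xi>. g y \<xi>) \<in> borel_measurable P"
  using measurable_compose[OF measurable_Pair[OF measurable_const[of y borel P] measurable_ident_sets[OF refl]] g_meas]
  by simp

lemma eta_sq: "\<eta>\<^sup>2 * \<rho> = \<gamma> / 2"
  using eta_eq rho gamma by (simp add: real_sqrt_pow2)

lemma eta_pos: "\<eta> > 0" using eta_eq rho gamma by simp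

lemma theta_pos: "\<theta> > 0" unfolding theta_eq using mu gamma by simp

lemma eta_sum: "\<eta> + \<eta>' = \<theta>" using eta_eq eta'_eq theta_eq by simp

lemma gamma'_diff: "\<gamma>' - \<gamma> = \<eta>" using eta_eq gamma'_eq by simp

lemma Lg: "L * \<gamma> * \<rho> \<le> 1"
proof -
  have "\<gamma> * (\<rho> * L) \<le> 1" using gamma L rho by (simp add: field_simps)
  then show ?thesis by (simp add: algebra_simps)
qed

definition Q :: "'a \<Rightarrow> 'a \<Rightarrow> real" where
  "Q y d = f y - fstar + (norm d)\<^sup>2 / 2 - \<eta> * (d \<bullet> grad y) - \<gamma> / 4 * (norm (grad y))\<^sup>2"

lemma one_jump:
  shows one_jump_le: "(\<integral>\<^sup>+\<xi>. ennreal (f (y - \<gamma> *\<^sub>R g y \<xi>) - fstar + (norm (d - \<eta> *\<^sub>R g y \<xi>))\<^sup>2 / 2) \<partial>P)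
     \<le> ennreal (Q y d)" (is "?I \<le> _")
    and Q_nonneg: "Q y d \<ge> 0"
proof -
  let ?G = "g y"
  let ?A = "f y - fstar + (norm d)\<^sup>2 / 2"
  let ?c = "\<gamma> *\<^sub>R grad y + \<eta> *\<^sub>R d"
  let ?k = "L * \<gamma>\<^sup>2 / 2 + \<eta>\<^sup>2 / 2"
  define W where "W \<xi> = ?A - ?c \<bullet> ?G \<xi> + ?k * (norm (?G \<xi>))\<^sup>2" for \<xi>
  define V' where "V' \<xi> = f (y - \<gamma> *\<^sub>R g y \<xi>) - fstar + (norm (d - \<eta> *\<^sub>R g y \<xi>))\<^sup>2 / 2" for \<xi>
  have intG: "integrable P ?G" and EG: "(\<integral>\<xi>. ?G \<xi> \<partial>P) = grad y" using unbiased by auto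
  have fin: "(\<integral>\<^sup>+\<xi>. ennreal ((norm (?G \<xi>))\<^sup>2) \<partial>P) < \<infinity>"
    using SGC[of y] by (simp add: order_le_less_trans)
  have intG2: "integrable P (\<lambda>\<xi>. (norm (?G \<xi>))\<^sup>2)"
    by (rule integrableI_bounded) (use fin in auto)
  have EG2: "(\<integral>\<xi>. (norm (?G \<xi>))\<^sup>2 \<partial>P) \<le> \<rho> * (norm (grad y))\<^sup>2"
  proof -
    have "ennreal (\<integral>\<xi>. (norm (?G \<xi>))\<^sup>2 \<partial>P) = (\<integral>\<^sup>+\<xi>. ennreal ((norm (?G \<xi>))\<^sup>2) \<partial>P)"
      by (rule nn_integral_eq_integral[symmetric]) (use intG2 in auto)
    also have "\<dots> \<le> ennreal (\<rho> * (norm (grad y))\<^sup>2)" by (rule SGC)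
    finally show ?thesis using rho by (subst (asm) ennreal_le_iff) auto
  qed
  have intW: "integrable P W"
    unfolding W_def using intG intG2 by auto
  have IW: "(\<integral>\<xi>. W \<xi> \<partial>P) = ?A - ?c \<bullet> grad y + ?k * (\<integral>\<xi>. (norm (?G \<xi>))\<^sup>2 \<partial>P)"
    unfolding W_def using intG intG2 EG
    by (simp add: Bochner_Integration.integral_diff Bochner_Integration.integral_add P.prob_space)
  have VW: "V' \<xi> \<le> W \<xi>" for \<xi>
  proof -
    have s: "f (y - \<gamma> *\<^sub>R ?G \<xi>) - f y - grad y \<bullet> ((y - \<gamma> *\<^sub>R ?G \<xi>) - y) \<le> L / 2 * (norm ((y - \<gamma> *\<^sub>R ?G \<xi>) - y))\<^sup>2"
      by (rule smooth)
    have n1: "(norm ((y - \<gamma> *\<^sub>R ?G \<xi>) - y))\<^sup>2 = \<gamma>\<^sup>2 * (norm (?G \<xi>))\<^sup>2"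
      by (simp add: power_mult_distrib)
    have n2: "(norm (d - \<eta> *\<^sub>R ?G \<xi>))\<^sup>2 = (norm d)\<^sup>2 - 2 * \<eta> * (d \<bullet> ?G \<xi>) + \<eta>\<^sup>2 * (norm (?G \<xi>))\<^sup>2"
      by (simp only: power2_norm_eq_inner) (simp add: inner_diff_left inner_diff_right inner_commute algebra_simps power2_eq_square)
    show ?thesis using s unfolding V'_def W_def n1 n2
      by (simp add: inner_add_left inner_diff_right field_simps)
  qed
  have V'0: "V' \<xi> \<ge> 0" for \<xi> unfolding V'_def using fmin[of "y - \<gamma> *\<^sub>R g y \<xi>"] by simp
  have IWQ: "(\<integral>\<xi>. W \<xi> \<partial>P) \<le> Q y d"
  proof -
    have "?k * (\<integral>\<xi>. (norm (?G \<xi>))\<^sup>2 \<partial>P) \<le> ?k * (\<rho> * (norm (grad y))\<^sup>2)"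
      by (rule mult_left_mono[OF EG2]) (use L in auto)
    also have "\<dots> = (L * \<gamma> * \<rho>) * (\<gamma> / 2) * (norm (grad y))\<^sup>2 + (\<eta>\<^sup>2 * \<rho>) / 2 * (norm (grad y))\<^sup>2"
      by (simp add: algebra_simps power2_eq_square)
    also have "\<dots> \<le> 1 * (\<gamma> / 2) * (norm (grad y))\<^sup>2 + (\<gamma> / 4) * (norm (grad y))\<^sup>2"
      unfolding eta_sq using Lg gamma by (intro add_mono mult_right_mono) auto
    finally have "?k * (\<integral>\<xi>. (norm (?G \<xi>))\<^sup>2 \<partial>P) \<le> 3 * \<gamma> / 4 * (norm (grad y))\<^sup>2" by simp
    moreover have "?c \<bullet> grad y = \<gamma> * (norm (grad y))\<^sup>2 + \<eta> * (d \<bullet> grad y)"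
      by (simp add: inner_add_left power2_norm_eq_inner)
    ultimately show ?thesis unfolding IW Q_def by simp
  qed
  have "?I = (\<integral>\<^sup>+\<xi>. ennreal (V' \<xi>) \<partial>P)" unfolding V'_def ..
  also have "\<dots> \<le> (\<integral>\<^sup>+\<xi>. ennreal (W \<xi>) \<partial>P)"
    by (intro nn_integral_mono ennreal_leI VW)
  also have "\<dots> = ennreal (\<integral>\<xi>. W \<xi> \<partial>P)"
    by (rule nn_integral_eq_integral[OF intW]) (use VW V'0 order_trans in blast)
  also have "\<dots> \<le> ennreal (Q y d)" using IWQ by (rule ennreal_leI)
  finally show "?I \<le> ennreal (Q y d)" .
  have "0 \<le> (\<integral>\<xi>. W \<xi> \<partial>P)"
    by (rule Bochner_Integration.integral_nonneg) (use VW V'0 order_trans in blast)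
  then show "Q y d \<ge> 0" using IWQ by simp
qed


lemma deriv_borel:
  fixes u u' :: "real \<Rightarrow> real"
  assumes d: "\<And>t. DERIV u t :> u' t"
  shows "u' \<in> borel_measurable borel"
proof -
  have cu: "continuous_on UNIV u"
    using d by (meson DERIV_isCont continuous_at_imp_continuous_on)
  have [measurable]: "u \<in> borel_measurable borel"
    by (rule borel_measurable_continuous_onI[OF cu])
  show ?thesis
  proof (rule borel_measurable_LIMSEQ_real[where u="\<lambda>n t. (u (t + inverse (real (Suc n))) - u t) / inverse (real (Suc n))"])
    fix t
    have lim: "(\<lambda>h. (u (t + h) - u t) / h) \<midarrow>0\<rightarrow> u' t" using d[of t] by (rule DERIV_D)
    have "filterlim (\<lambda>n. inverse (real (Suc n))) (at 0) sequentially"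
      using LIMSEQ_inverse_real_of_nat unfolding filterlim_at by (simp del: of_nat_Suc)
    from filterlim_compose[OF lim this]
    show "(\<lambda>n. (u (t + inverse (real (Suc n))) - u t) / inverse (real (Suc n))) \<longlonglongrightarrow> u' t" .
  next
    fix n show "(\<lambda>t. (u (t + inverse (real (Suc n))) - u t) / inverse (real (Suc n))) \<in> borel_measurable borel"
      by measurable
  qed
qed

definition "X x z t = x + (\<eta> / \<theta> * (1 - exp (- \<theta> * t))) *\<^sub>R (z - x)"
definition "dd x z t = exp (- \<theta> * t) *\<^sub>R (z - x)"
definition "phi x z t = f (X x z t) - fstar"
definition "phi' x z t = \<eta> * (grad (X x z t) \<bullet> dd x z t)"
definition "psi x z t = exp (- (2 * \<theta>) * t) * (norm (z - x))\<^sup>2 / 2"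
definition "u x z t = exp (\<theta> * t) * (phi x z t + psi x z t)"
definition "u' x z t = \<theta> * u x z t + exp (\<theta> * t) * (phi' x z t - 2 * \<theta> * psi x z t)"
definition "Fn x z t = - (exp (- t) * u x z t)"
definition "hh x z t = exp (- t) * (u x z t - u' x z t)"

lemma X_deriv: "(X x z has_derivative (\<lambda>h. h *\<^sub>R (\<eta> * exp (- \<theta> * t)) *\<^sub>R (z - x))) (at t)"
  unfolding X_def using theta_pos
  by (auto intro!: derivative_eq_intros simp: fun_eq_iff)

lemma phi_deriv: "DERIV (phi x z) t :> phi' x z t"
proof -
  have "((\<lambda>t. f (X x z t)) has_derivative (\<lambda>h. grad (X x z t) \<bullet> (h *\<^sub>R (\<eta> * exp (- \<theta> * t)) *\<^sub>R (z - x)))) (at t)"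
    using diff_chain_at[OF X_deriv deriv] by (simp add: o_def)
  then have "((\<lambda>t. f (X x z t) - fstar) has_derivative (\<lambda>h. grad (X x z t) \<bullet> (h *\<^sub>R (\<eta> * exp (- \<theta> * t)) *\<^sub>R (z - x)))) (at t)"
    by (auto intro!: derivative_eq_intros)
  moreover have "(\<lambda>h. grad (X x z t) \<bullet> (h *\<^sub>R (\<eta> * exp (- \<theta> * t)) *\<^sub>R (z - x))) = (*) (phi' x z t)"
    by (simp add: fun_eq_iff phi'_def dd_def algebra_simps)
  ultimately show ?thesis unfolding phi_def has_field_derivative_def by simp
qed

lemma psi_deriv: "DERIV (psi x z) t :> - (2 * \<theta>) * psi x z t"
  unfolding psi_def by (auto intro!: derivative_eq_intros simp: algebra_simps)

lemma u_deriv: "DERIV (u x z) t :> u' x z t"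
  unfolding u_def[abs_def]
  by (rule derivative_eq_intros phi_deriv psi_deriv refl)+
     (simp add: u'_def u_def algebra_simps)

lemma F_deriv: "DERIV (Fn x z) t :> hh x z t"
  unfolding Fn_def[abs_def]
  by (rule derivative_eq_intros u_deriv refl)+ (simp add: hh_def algebra_simps)

lemma dd_norm: "(norm (dd x z t))\<^sup>2 / 2 = psi x z t"
  unfolding dd_def psi_def
  by (simp add: power_mult_distrib exp_of_nat_mult[symmetric] power2_eq_square exp_add[symmetric])

lemma hh_ge: "exp (- t) * (exp (\<theta> * t) * Q (X x z t) (dd x z t)) \<le> hh x z t"
proof -
  have pl0: "(\<gamma> / 4) * (2 * \<mu> * (f (X x z t) - fstar)) \<le> \<gamma> / 4 * (norm (grad (X x z t)))\<^sup>2"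
    using PL gamma by (intro mult_left_mono) auto
  have "\<theta> * phi x z t = (\<gamma> / 4) * (2 * \<mu> * (f (X x z t) - fstar))"
    by (simp add: phi_def) (simp add: theta_eq)
  with pl0 have pl: "\<gamma> / 4 * (norm (grad (X x z t)))\<^sup>2 \<ge> \<theta> * phi x z t" by simp
  have ps: "psi x z t \<ge> 0" unfolding psi_def by simp
  have qe: "Q (X x z t) (dd x z t) = phi x z t + psi x z t - phi' x z t - \<gamma> / 4 * (norm (grad (X x z t)))\<^sup>2"
    unfolding Q_def dd_norm phi_def phi'_def by (simp add: inner_commute)
  have tp: "\<theta> * psi x z t \<ge> 0" using ps theta_pos by simp
  have "Q (X x z t) (dd x z t) \<le> (1 - \<theta>) * phi x z t - phi' x z t + (1 + \<theta>) * psi x z t"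
    unfolding qe using pl tp by (simp add: algebra_simps)
  then have "exp (\<theta> * t) * Q (X x z t) (dd x z t) \<le> u x z t - u' x z t"
  proof -
    have "exp (\<theta> * t) * Q (X x z t) (dd x z t) \<le> exp (\<theta> * t) * ((1 - \<theta>) * phi x z t - phi' x z t + (1 + \<theta>) * psi x z t)"
      using \<open>Q (X x z t) (dd x z t) \<le> _\<close> by (rule mult_left_mono) simp
    also have "\<dots> = u x z t - u' x z t"
      unfolding u'_def u_def by (simp add: algebra_simps)
    finally show ?thesis .
  qed
  then show ?thesis unfolding hh_def by simp
qed

lemma hh_nonneg: "hh x z t \<ge> 0"
  using hh_ge[of t x z] Q_nonneg[of "X x z t" "dd x z t"]
  by (meson exp_ge_zero mult_nonneg_nonneg order_trans)

lemma hh_borel[measurable]: "hh x z \<in> borel_measurable borel"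
proof -
  have cu: "continuous_on UNIV (u x z)"
    using u_deriv by (meson DERIV_isCont continuous_at_imp_continuous_on)
  have [measurable]: "u x z \<in> borel_measurable borel"
    by (rule borel_measurable_continuous_onI[OF cu])
  have [measurable]: "u' x z \<in> borel_measurable borel"
    by (rule deriv_borel[OF u_deriv])
  show ?thesis unfolding hh_def[abs_def] by measurable
qed

lemma hh_int: "(\<integral>\<^sup>+t. ennreal (hh x z t) * indicator {0..} t \<partial>lborel) \<le> ennreal (f x - fstar + (norm (z - x))\<^sup>2 / 2)"
proof -
  let ?f = "\<lambda>(i::nat) (t::real). ennreal (hh x z t) * indicator {0..0 + real i} t"
  let ?fR = "\<lambda>t. ennreal (hh x z t) * indicator {0 ..} t"
  have "(SUP i. ?f i t) = ?fR t" for t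
  proof (rule LIMSEQ_unique[OF LIMSEQ_SUP])
    obtain n where "t - 0 < real n"
      using reals_Archimedean2[of "t - 0"] ..
    then have "eventually (\<lambda>n. ?f n t = ?fR t) sequentially"
      by (auto simp: frequently_def intro!: eventually_sequentiallyI[where c=n] split: split_indicator)
    then show "(\<lambda>n. ?f n t) \<longlonglongrightarrow> ?fR t"
      by (rule tendsto_eventually)
  qed (auto simp: hh_nonneg incseq_def le_fun_def split: split_indicator)
  then have "integral\<^sup>N lborel ?fR = (\<integral>\<^sup>+ t. (SUP i. ?f i t) \<partial>lborel)"
    by simp
  also have "\<dots> = (SUP i. (\<integral>\<^sup>+ t. ?f i t \<partial>lborel))"
  proof (rule nn_integral_monotone_convergence_SUP)
    show "incseq ?f"
      using hh_nonneg by (auto simp: incseq_def le_fun_def split: split_indicator)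
    show "\<And>i. (?f i) \<in> borel_measurable lborel"
      by auto
  qed
  also have "\<dots> = (SUP i. ennreal (Fn x z (0 + real i) - Fn x z 0))"
    by (subst nn_integral_FTC_Icc[OF hh_borel F_deriv hh_nonneg]) auto
  also have "\<dots> \<le> ennreal (f x - fstar + (norm (z - x))\<^sup>2 / 2)"
  proof (rule SUP_least)
    fix i :: nat
    have "u x z (real i) \<ge> 0"
      unfolding u_def phi_def psi_def using fmin[of "X x z (real i)"] by simp
    moreover have "u x z 0 = f x - fstar + (norm (z - x))\<^sup>2 / 2"
      unfolding u_def phi_def psi_def X_def by simp
    ultimately show "ennreal (Fn x z (0 + real i) - Fn x z 0) \<le> ennreal (f x - fstar + (norm (z - x))\<^sup>2 / 2)"
      unfolding Fn_def by (intro ennreal_leI) (simp add: mult_nonneg_nonneg)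
  qed
  finally show ?thesis .
qed

definition cstep :: "'a \<times> 'a \<Rightarrow> real \<times> 'b \<Rightarrow> 'a \<times> 'a" where
  "cstep p w =
     (let x = fst p; z = snd p; \<Delta> = fst w; \<xi> = snd w;
          e = exp (- (\<eta> + \<eta>') * \<Delta>);
          y = x + (\<eta> / (\<eta> + \<eta>') * (1 - e)) *\<^sub>R (z - x);
          G = g y \<xi>
      in (y - \<gamma> *\<^sub>R G,
          z + (\<eta>' * (1 - e) / (\<eta>' + \<eta> * e)) *\<^sub>R (y - z) - \<gamma>' *\<^sub>R G))"

definition V :: "'a \<times> 'a \<Rightarrow> real" where
  "V p = f (fst p) - fstar + (norm (snd p - fst p))\<^sup>2 / 2"

lemma V_nonneg: "V p \<ge> 0"
  unfolding V_def using fmin[of "fst p"] by simp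

lemma V_meas[measurable]: "V \<in> borel_measurable (borel \<Otimes>\<^sub>M borel)"
  unfolding V_def[abs_def] by measurable

lemma cstep_regular:
  assumes ne: "\<eta>' + \<eta> * exp (- \<theta> * \<Delta>) \<noteq> 0"
  shows "V (cstep (x, z) (\<Delta>, \<xi>)) =
    f (X x z \<Delta> - \<gamma> *\<^sub>R g (X x z \<Delta>) \<xi>) - fstar + (norm (dd x z \<Delta> - \<eta> *\<^sub>R g (X x z \<Delta>) \<xi>))\<^sup>2 / 2"
proof -
  define e where "e = exp (- \<theta> * \<Delta>)"
  define a where "a = \<eta> / \<theta> * (1 - e)"
  define c where "c = \<eta>' * (1 - e) / (\<eta>' + \<eta> * e)"
  define G where "G = g (X x z \<Delta>) \<xi>"
  have th: "\<theta> \<noteq> 0" using theta_pos by simp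
  have ne': "\<eta>' + \<eta> * e \<noteq> 0" using ne e_def by simp
  have s1: "1 - c = \<theta> * e / (\<eta>' + \<eta> * e)"
    unfolding c_def using ne' eta_sum[symmetric] by (simp add: field_simps)
  have s2: "1 - a = (\<eta>' + \<eta> * e) / \<theta>"
    unfolding a_def using th eta_sum[symmetric] by (simp add: field_simps)
  have sc: "(1 - c) * (1 - a) = e"
    unfolding s1 s2 using th ne' by simp
  have Xe: "X x z \<Delta> = x + a *\<^sub>R (z - x)" unfolding X_def a_def e_def ..
  have cs: "cstep (x, z) (\<Delta>, \<xi>) = (X x z \<Delta> - \<gamma> *\<^sub>R G, z + c *\<^sub>R (X x z \<Delta> - z) - \<gamma>' *\<^sub>R G)"
    unfolding cstep_def Let_def using eta_sum by (simp add: X_def e_def c_def G_def)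
  have "z + c *\<^sub>R (X x z \<Delta> - z) - \<gamma>' *\<^sub>R G - (X x z \<Delta> - \<gamma> *\<^sub>R G)
      = ((1 - c) * (1 - a)) *\<^sub>R (z - x) - (\<gamma>' - \<gamma>) *\<^sub>R G"
    unfolding Xe by (simp add: algebra_simps)
  also have "\<dots> = dd x z \<Delta> - \<eta> *\<^sub>R G"
    unfolding sc gamma'_diff dd_def e_def ..
  finally show ?thesis unfolding cs V_def G_def by simp
qed

abbreviation M0 :: "(real \<times> 'b) measure" where
  "M0 \<equiv> density lborel (exponential_density 1) \<Otimes>\<^sub>M P"

lemma sets_M0: "sets M0 = sets (borel \<Otimes>\<^sub>M P)"
  by (rule sets_pair_measure_cong) auto

definition "Yc p w = fst p + (\<eta> / (\<eta> + \<eta>') * (1 - exp (- (\<eta> + \<eta>') * fst w))) *\<^sub>R (snd p - fst p)"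
definition "cc w = \<eta>' * (1 - exp (- (\<eta> + \<eta>') * fst w)) / (\<eta>' + \<eta> * exp (- (\<eta> + \<eta>') * fst w))"

lemma cstep_alt: "cstep p w = (Yc p w - \<gamma> *\<^sub>R g (Yc p w) (snd w), snd p + cc w *\<^sub>R (Yc p w - snd p) - \<gamma>' *\<^sub>R g (Yc p w) (snd w))"
  unfolding cstep_def Let_def Yc_def cc_def ..

lemma cstep_meas0: "(\<lambda>q. cstep (fst q) (snd q)) \<in> measurable ((borel \<Otimes>\<^sub>M borel) \<Otimes>\<^sub>M (borel \<Otimes>\<^sub>M P)) (borel \<Otimes>\<^sub>M borel)"
proof -
  let ?N = "(borel \<Otimes>\<^sub>M borel) \<Otimes>\<^sub>M (borel \<Otimes>\<^sub>M P) :: (('a \<times> 'a) \<times> (real \<times> 'b)) measure"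
  have Ym: "(\<lambda>q. Yc (fst q) (snd q)) \<in> borel_measurable ?N"
    unfolding Yc_def by measurable
  have cm: "(\<lambda>q. cc (snd q)) \<in> borel_measurable ?N"
    unfolding cc_def by measurable
  have xim: "(\<lambda>q. snd (snd q)) \<in> measurable ?N P" by measurable
  have Gm: "(\<lambda>q. g (Yc (fst q) (snd q)) (snd (snd q))) \<in> borel_measurable ?N"
    by (rule measurable_Pair_compose_split[OF g_meas Ym xim])
  have zm: "(\<lambda>q. snd (fst q)) \<in> borel_measurable ?N" by measurable
  have "(\<lambda>q. (Yc (fst q) (snd q) - \<gamma> *\<^sub>R g (Yc (fst q) (snd q)) (snd (snd q)),
            snd (fst q) + cc (snd q) *\<^sub>R (Yc (fst q) (snd q) - snd (fst q)) - \<gamma>' *\<^sub>R g (Yc (fst q) (snd q)) (snd (snd q))))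
        \<in> measurable ?N (borel \<Otimes>\<^sub>M borel)"
    using Ym cm Gm zm by measurable
  then show ?thesis unfolding cstep_alt .
qed

lemma cstep_meas: "(\<lambda>q. cstep (fst q) (snd q)) \<in> measurable ((borel \<Otimes>\<^sub>M borel) \<Otimes>\<^sub>M M0) (borel \<Otimes>\<^sub>M borel)"
proof -
  have "sets ((borel \<Otimes>\<^sub>M borel) \<Otimes>\<^sub>M M0) = sets ((borel \<Otimes>\<^sub>M borel) \<Otimes>\<^sub>M (borel \<Otimes>\<^sub>M P))"
    by (rule sets_pair_measure_cong[OF refl sets_M0])
  then have eq2: "measurable ((borel \<Otimes>\<^sub>M borel) \<Otimes>\<^sub>M M0) (borel \<Otimes>\<^sub>M borel) = measurable ((borel \<Otimes>\<^sub>M borel) \<Otimes>\<^sub>M (borel \<Otimes>\<^sub>M P)) (borel \<Otimes>\<^sub>M borel)"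
    by (rule measurable_cong_sets) (rule refl)
  show ?thesis by (subst eq2) (rule cstep_meas0)
qed

lemma prob_M0: "prob_space M0"
  by (rule prob_space_pair[OF prob_space_exponential_density P.prob_space_axioms]) simp

lemma meas_M0: "measurable M0 N = measurable (borel \<Otimes>\<^sub>M P) N"
  by (rule measurable_cong_sets[OF sets_M0 refl])

lemma meas_lborelP: "measurable (lborel \<Otimes>\<^sub>M P) N = measurable (borel \<Otimes>\<^sub>M P) N"
  by (rule measurable_cong_sets[OF _ refl]) (rule sets_pair_measure_cong; simp)

lemma cstep_meas_p: "(\<lambda>w. cstep p w) \<in> measurable (borel \<Otimes>\<^sub>M P) (borel \<Otimes>\<^sub>M borel)"
  using measurable_compose_Pair1[OF _ cstep_meas0, of p] by (simp add: space_pair_measure)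

lemma K_meas: "(\<lambda>w. ennreal (exp (\<theta> * fst w) * V (cstep p w))) \<in> borel_measurable (borel \<Otimes>\<^sub>M P)"
  using cstep_meas_p[of p] by measurable

lemma one_step: "(\<integral>\<^sup>+w. ennreal (exp (\<theta> * fst w) * V (cstep p w)) \<partial>M0) \<le> ennreal (V p)"
proof -
  obtain x z where p: "p = (x, z)" by (cases p)
  let ?K = "\<lambda>w. ennreal (exp (\<theta> * fst w) * V (cstep p w))"
  have Km0: "?K \<in> borel_measurable M0" unfolding meas_M0 by (rule K_meas)
  have Kml: "?K \<in> borel_measurable (lborel \<Otimes>\<^sub>M P)" unfolding meas_lborelP by (rule K_meas)
  have "(\<integral>\<^sup>+w. ?K w \<partial>M0) = (\<integral>\<^sup>+\<Delta>. (\<integral>\<^sup>+\<xi>. ?K (\<Delta>, \<xi>) \<partial>P) \<partial>density lborel (exponential_density 1))"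
    by (rule P.nn_integral_fst[OF Km0, symmetric])
  also have "\<dots> = (\<integral>\<^sup>+\<Delta>. ennreal (exponential_density 1 \<Delta>) * (\<integral>\<^sup>+\<xi>. ?K (\<Delta>, \<xi>) \<partial>P) \<partial>lborel)"
    by (rule nn_integral_density) (auto intro: P.borel_measurable_nn_integral_fst[OF Kml, simplified])
  also have "\<dots> \<le> (\<integral>\<^sup>+\<Delta>. ennreal (hh x z \<Delta>) * indicator {0..} \<Delta> \<partial>lborel)"
  proof (rule nn_integral_mono_AE)
    define c0 where "c0 = - ln (- \<eta>' / \<eta>) / \<theta>"
    have "AE \<Delta> in lborel. \<Delta> \<noteq> c0" by (rule AE_lborel_singleton)
    then show "AE \<Delta> in lborel. ennreal (exponential_density 1 \<Delta>) * (\<integral>\<^sup>+\<xi>. ?K (\<Delta>, \<xi>) \<partial>P)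
                 \<le> ennreal (hh x z \<Delta>) * indicator {0..} \<Delta>"
    proof (rule eventually_mono)
      fix \<Delta> :: real assume nc: "\<Delta> \<noteq> c0"
      have ne: "\<eta>' + \<eta> * exp (- \<theta> * \<Delta>) \<noteq> 0"
      proof
        assume eq0: "\<eta>' + \<eta> * exp (- \<theta> * \<Delta>) = 0"
        then have "exp (- \<theta> * \<Delta>) = - \<eta>' / \<eta>" using eta_pos by (simp add: field_simps)
        then have "ln (exp (- \<theta> * \<Delta>)) = ln (- \<eta>' / \<eta>)" by simp
        then have "- \<theta> * \<Delta> = ln (- \<eta>' / \<eta>)" by simp
        then have "\<Delta> = c0" unfolding c0_def using theta_pos by (simp add: field_simps)
        with nc show False by simp
      qed
      show "ennreal (exponential_density 1 \<Delta>) * (\<integral>\<^sup>+\<xi>. ?K (\<Delta>, \<xi>) \<partial>P) \<le> ennreal (hh x z \<Delta>) * indicator {0..} \<Delta>"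
      proof (cases "\<Delta> < 0")
        case True then show ?thesis by (simp add: exponential_density_def)
      next
        case False
        let ?X = "X x z \<Delta>" and ?d = "dd x z \<Delta>"
        have Vm: "(\<lambda>\<xi>. ennreal (V (cstep p (\<Delta>, \<xi>)))) \<in> borel_measurable P"
          using measurable_compose_Pair1[OF _ cstep_meas_p[of p], of \<Delta>] by measurable
        have "(\<integral>\<^sup>+\<xi>. ?K (\<Delta>, \<xi>) \<partial>P) = (\<integral>\<^sup>+\<xi>. ennreal (exp (\<theta> * \<Delta>)) * ennreal (V (cstep p (\<Delta>, \<xi>))) \<partial>P)"
          by (intro nn_integral_cong) (simp add: ennreal_mult V_nonneg)
        also have "\<dots> = ennreal (exp (\<theta> * \<Delta>)) * (\<integral>\<^sup>+\<xi>. ennreal (V (cstep p (\<Delta>, \<xi>))) \<partial>P)"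
          by (rule nn_integral_cmult[OF Vm])
        also have "(\<integral>\<^sup>+\<xi>. ennreal (V (cstep p (\<Delta>, \<xi>))) \<partial>P)
            = (\<integral>\<^sup>+\<xi>. ennreal (f (?X - \<gamma> *\<^sub>R g ?X \<xi>) - fstar + (norm (?d - \<eta> *\<^sub>R g ?X \<xi>))\<^sup>2 / 2) \<partial>P)"
          unfolding p by (intro nn_integral_cong) (simp add: cstep_regular[OF ne])
        also have "\<dots> \<le> ennreal (Q ?X ?d)" by (rule one_jump_le)
        finally have "(\<integral>\<^sup>+\<xi>. ?K (\<Delta>, \<xi>) \<partial>P) \<le> ennreal (exp (\<theta> * \<Delta>)) * ennreal (Q ?X ?d)"
          by (simp add: mult_left_mono)
        then have "ennreal (exponential_density 1 \<Delta>) * (\<integral>\<^sup>+\<xi>. ?K (\<Delta>, \<xi>) \<partial>P)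
            \<le> ennreal (exp (- \<Delta>)) * (ennreal (exp (\<theta> * \<Delta>)) * ennreal (Q ?X ?d))"
          using False by (simp add: exponential_density_def mult_left_mono)
        also have "\<dots> = ennreal (exp (- \<Delta>) * (exp (\<theta> * \<Delta>) * Q ?X ?d))"
          by (simp add: ennreal_mult Q_nonneg)
        also have "\<dots> \<le> ennreal (hh x z \<Delta>)" by (rule ennreal_leI[OF hh_ge])
        finally show ?thesis using False by simp
      qed
    qed
  qed
  also have "\<dots> \<le> ennreal (f x - fstar + (norm (z - x))\<^sup>2 / 2)" by (rule hh_int)
  also have "\<dots> = ennreal (V p)" unfolding p V_def by simp
  finally show ?thesis .
qed

abbreviation Om :: "(nat \<Rightarrow> real \<times> 'b) measure" where
  "Om \<equiv> \<Pi>\<^sub>M i\<in>(UNIV::nat set). M0"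

lemma seq_space: "sequence_space M0"
  unfolding sequence_space_def product_prob_space_def product_sigma_finite_def product_prob_space_axioms_def
  using prob_M0 by (simp add: prob_space_imp_sigma_finite)

lemma iter_Suc: "cn_iter \<eta> \<eta>' \<gamma> \<gamma>' g x0 \<omega> (Suc k) = cstep (cn_iter \<eta> \<eta>' \<gamma> \<gamma>' g x0 \<omega> k) (\<omega> k)"
  by (simp add: cstep_def Let_def)

lemma iter_prefix: "(\<And>j. j < k \<Longrightarrow> \<omega> j = \<omega>' j) \<Longrightarrow> cn_iter \<eta> \<eta>' \<gamma> \<gamma>' g x0 \<omega> k = cn_iter \<eta> \<eta>' \<gamma> \<gamma>' g x0 \<omega>' k"
  by (induction k) (simp_all only: iter_Suc, simp_all)

lemma T_Suc: "cn_T \<omega> (Suc k) = cn_T \<omega> k + fst (\<omega> k)"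
  by (simp add: cn_T_def)

lemma T_prefix: "(\<And>j. j < k \<Longrightarrow> \<omega> j = \<omega>' j) \<Longrightarrow> cn_T \<omega> k = cn_T \<omega>' k"
  unfolding cn_T_def by (intro sum.cong) auto

lemma fst_M0[measurable]: "fst \<in> borel_measurable M0"
  unfolding meas_M0 by simp

lemma S_meas: "(\<lambda>\<omega>. cn_iter \<eta> \<eta>' \<gamma> \<gamma>' g x0 \<omega> k) \<in> measurable Om (borel \<Otimes>\<^sub>M borel)"
proof (induction k)
  case 0
  then show ?case by (simp add: space_pair_measure)
next
  case (Suc k)
  have "(\<lambda>\<omega>. (cn_iter \<eta> \<eta>' \<gamma> \<gamma>' g x0 \<omega> k, \<omega> k)) \<in> measurable Om ((borel \<Otimes>\<^sub>M borel) \<Otimes>\<^sub>M M0)"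
    by (rule measurable_Pair[OF Suc measurable_component_singleton]) simp
  from measurable_compose[OF this cstep_meas] show ?case by (simp only: iter_Suc fst_conv snd_conv)
qed

lemma comp_meas: "(\<lambda>\<omega>. \<omega> i) \<in> measurable Om M0"
  by (rule measurable_component_singleton) simp

lemma T_meas: "(\<lambda>\<omega>. cn_T \<omega> k) \<in> borel_measurable Om"
proof -
  have "(\<lambda>\<omega>. fst (\<omega> i)) \<in> borel_measurable Om" for i
    using measurable_compose[OF comp_meas fst_M0] by (simp add: o_def)
  then show ?thesis unfolding cn_T_def by (intro borel_measurable_sum) auto
qed

lemma K_meas0: "(\<lambda>w. ennreal (exp (\<theta> * fst w) * V (cstep p w))) \<in> borel_measurable M0"
  unfolding meas_M0 by (rule K_meas)

lemma main: "(\<integral>\<^sup>+\<omega>. ennreal (exp (\<theta> * cn_T \<omega> k) * V (cn_iter \<eta> \<eta>' \<gamma> \<gamma>' g x0 \<omega> k)) \<partial>Om) \<le> ennreal (V (x0, x0))"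
proof (induction k)
  interpret SQ: sequence_space M0 by (rule seq_space)
  case 0
  then show ?case by (simp add: cn_T_def SQ.P.emeasure_space_1)
next
  interpret SQ: sequence_space M0 by (rule seq_space)
  case (Suc k)
  let ?S = "\<lambda>\<omega> k. cn_iter \<eta> \<eta>' \<gamma> \<gamma>' g x0 \<omega> k"
  let ?H = "\<lambda>\<omega>. ennreal (exp (\<theta> * cn_T \<omega> (Suc k)) * V (?S \<omega> (Suc k)))"
  have Sm[measurable]: "(\<lambda>\<omega>. ?S \<omega> j) \<in> measurable Om (borel \<Otimes>\<^sub>M borel)" for j by (rule S_meas)
  have Tm[measurable]: "(\<lambda>\<omega>. cn_T \<omega> j) \<in> borel_measurable Om" for j by (rule T_meas)
  have Vm: "(\<lambda>\<omega>. V (?S \<omega> (Suc k))) \<in> borel_measurable Om"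
    by (rule measurable_compose[OF Sm V_meas])
  have Em: "(\<lambda>\<omega>. exp (\<theta> * cn_T \<omega> (Suc k))) \<in> borel_measurable Om"
    using Tm[of "Suc k"] by measurable
  have "(\<lambda>\<omega>. exp (\<theta> * cn_T \<omega> (Suc k)) * V (?S \<omega> (Suc k))) \<in> borel_measurable Om"
    by (rule borel_measurable_times[OF Em Vm])
  from measurable_compose[OF this measurable_ennreal]
  have Hm: "?H \<in> borel_measurable Om" .
  have "(\<integral>\<^sup>+\<omega>. ?H \<omega> \<partial>Om) = (\<integral>\<^sup>+\<omega>. ?H \<omega> \<partial>distr (Om \<Otimes>\<^sub>M Om) Om (\<lambda>(\<omega>, \<omega>'). comb_seq k \<omega> \<omega>'))"
    by (simp only: SQ.PiM_comb_seq)
  also have "\<dots> = (\<integral>\<^sup>+q. ?H ((\<lambda>(\<omega>, \<omega>'). comb_seq k \<omega> \<omega>') q) \<partial>(Om \<Otimes>\<^sub>M Om))"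
    by (rule nn_integral_distr[OF measurable_comb_seq]) (subst measurable_distr_eq1, rule Hm)
  also have "\<dots> = (\<integral>\<^sup>+a. (\<integral>\<^sup>+b. ?H (comb_seq k a b) \<partial>Om) \<partial>Om)"
  proof -
    have HH: "(\<lambda>q. ?H ((\<lambda>(\<omega>, \<omega>'). comb_seq k \<omega> \<omega>') q)) \<in> borel_measurable (Om \<Otimes>\<^sub>M Om)"
      by (rule measurable_compose[OF measurable_comb_seq Hm])
    show ?thesis using SQ.P.nn_integral_fst[OF HH, symmetric] by (simp only: case_prod_conv)
  qed
  also have "\<dots> \<le> (\<integral>\<^sup>+a. ennreal (exp (\<theta> * cn_T a k) * V (?S a k)) \<partial>Om)"
  proof (rule nn_integral_mono)
    fix a :: "nat \<Rightarrow> real \<times> 'b"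
    have pre: "\<And>j. j < k \<Longrightarrow> comb_seq k a b j = a j" for b by (simp add: comb_seq_less)
    have ck: "comb_seq k a b k = b 0" for b by (simp add: comb_seq_def)
    let ?K = "\<lambda>w. ennreal (exp (\<theta> * fst w) * V (cstep (?S a k) w))"
    have Km: "(\<lambda>b. ?K (b 0)) \<in> borel_measurable Om"
      using measurable_compose[OF comp_meas K_meas0] by (simp add: o_def)
    have "(\<integral>\<^sup>+b. ?H (comb_seq k a b) \<partial>Om) = (\<integral>\<^sup>+b. ennreal (exp (\<theta> * cn_T a k)) * ?K (b 0) \<partial>Om)"
    proof (rule nn_integral_cong)
      fix b
      have "?H (comb_seq k a b) = ennreal (exp (\<theta> * cn_T a k) * (exp (\<theta> * fst (b 0)) * V (cstep (?S a k) (b 0))))"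
      proof -
        have e1: "?S (comb_seq k a b) k = ?S a k" by (rule iter_prefix) (simp add: comb_seq_less)
        have e2: "cn_T (comb_seq k a b) k = cn_T a k" by (rule T_prefix) (simp add: comb_seq_less)
        show ?thesis
        unfolding iter_Suc T_Suc ck e1 e2
        by (simp add: distrib_left exp_add mult.assoc)
      qed
      also have "\<dots> = ennreal (exp (\<theta> * cn_T a k)) * ?K (b 0)"
        by (simp add: ennreal_mult V_nonneg)
      finally show "?H (comb_seq k a b) = ennreal (exp (\<theta> * cn_T a k)) * ?K (b 0)" .
    qed
    also have "\<dots> = ennreal (exp (\<theta> * cn_T a k)) * (\<integral>\<^sup>+b. ?K (b 0) \<partial>Om)"
      by (rule nn_integral_cmult[OF Km])
    also have "(\<integral>\<^sup>+b. ?K (b 0) \<partial>Om) = (\<integral>\<^sup>+w. ?K w \<partial>M0)"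
    proof -
      have "(\<integral>\<^sup>+w. ?K w \<partial>M0) = (\<integral>\<^sup>+w. ?K w \<partial>distr Om M0 (\<lambda>\<omega>. \<omega> 0))"
        by (subst distr_PiM_component) (auto intro: prob_M0)
      also have "\<dots> = (\<integral>\<^sup>+b. ?K (b 0) \<partial>Om)"
        by (rule nn_integral_distr[OF comp_meas]) (simp add: K_meas0)
      finally show ?thesis ..
    qed
    also have "ennreal (exp (\<theta> * cn_T a k)) * (\<integral>\<^sup>+w. ?K w \<partial>M0) \<le> ennreal (exp (\<theta> * cn_T a k)) * ennreal (V (?S a k))"
      by (rule mult_left_mono[OF one_step]) simp
    also have "\<dots> = ennreal (exp (\<theta> * cn_T a k) * V (?S a k))"
      by (simp add: ennreal_mult V_nonneg)
    finally show "(\<integral>\<^sup>+b. ?H (comb_seq k a b) \<partial>Om) \<le> ennreal (exp (\<theta> * cn_T a k) * V (?S a k))" .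
  qed
  also have "\<dots> \<le> ennreal (V (x0, x0))" by (rule Suc)
  finally show ?case .
qed

lemma final: "\<forall>k::nat. (\<integral>\<^sup>+\<omega>. ennreal (exp (\<theta> * cn_T \<omega> k) * (f (fst (cn_iter \<eta> \<eta>' \<gamma> \<gamma>' g x0 \<omega> k)) - fstar)) \<partial>cn_law P)
    \<le> ennreal (f x0 - fstar)"
proof
  fix k :: nat
  have "(\<integral>\<^sup>+\<omega>. ennreal (exp (\<theta> * cn_T \<omega> k) * (f (fst (cn_iter \<eta> \<eta>' \<gamma> \<gamma>' g x0 \<omega> k)) - fstar)) \<partial>cn_law P)
     \<le> (\<integral>\<^sup>+\<omega>. ennreal (exp (\<theta> * cn_T \<omega> k) * V (cn_iter \<eta> \<eta>' \<gamma> \<gamma>' g x0 \<omega> k)) \<partial>Om)"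
    unfolding cn_law_def
    by (intro nn_integral_mono ennreal_leI mult_left_mono) (auto simp: V_def)
  also have "\<dots> \<le> ennreal (V (x0, x0))" by (rule main)
  also have "V (x0, x0) = f x0 - fstar" by (simp add: V_def)
  finally show "(\<integral>\<^sup>+\<omega>. ennreal (exp (\<theta> * cn_T \<omega> k) * (f (fst (cn_iter \<eta> \<eta>' \<gamma> \<gamma>' g x0 \<omega> k)) - fstar)) \<partial>cn_law P)
    \<le> ennreal (f x0 - fstar)" .
qed

end

theorem theorem2:
  fixes f :: "'a::euclidean_space \<Rightarrow> real" and grad :: "'a \<Rightarrow> 'a"
    and P :: "'b measure" and g :: "'a \<Rightarrow> 'b \<Rightarrow> 'a"
    and fstar L \<mu> \<rho> \<gamma> :: real and x0 :: 'a
  assumes deriv: "\<And>x. (f has_derivative (\<lambda>h. grad x \<bullet> h)) (at x)"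
    and fmin: "\<And>x. fstar \<le> f x" and fmin_att: "\<exists>x. f x = fstar"
    and L: "L > 0" and mu: "\<mu> > 0" and rho: "\<rho> \<ge> 1"
    and smooth: "\<And>x y. f x - f y - grad y \<bullet> (x - y) \<le> L / 2 * (norm (x - y))\<^sup>2"
    and PL: "\<And>x. (norm (grad x))\<^sup>2 \<ge> 2 * \<mu> * (f x - fstar)"
    and P: "prob_space P"
    and g_meas: "(\<lambda>(x, \<xi>). g x \<xi>) \<in> borel_measurable (borel \<Otimes>\<^sub>M P)"
    and unbiased: "\<And>x. integrable P (g x) \<and> (\<integral>\<xi>. g x \<xi> \<partial>P) = grad x"
    and SGC: "\<And>x. (\<integral>\<^sup>+\<xi>. ennreal ((norm (g x \<xi>))\<^sup>2) \<partial>P) \<le> ennreal (\<rho> * (norm (grad x))\<^sup>2)"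
    and gamma: "0 < \<gamma>" "\<gamma> \<le> 1 / (\<rho> * L)"
  shows "\<forall>k::nat.
    (\<integral>\<^sup>+\<omega>. ennreal (exp (\<mu> * \<gamma> / 2 * cn_T \<omega> k) *
         (f (fst (cn_iter (sqrt (\<gamma> / (2 * \<rho>))) (\<mu> * \<gamma> / 2 - sqrt (\<gamma> / (2 * \<rho>)))
                   \<gamma> (\<gamma> + sqrt (\<gamma> / (2 * \<rho>))) g x0 \<omega> k)) - fstar)) \<partial>cn_law P)
    \<le> ennreal (f x0 - fstar)"
proof -
  interpret cnl P f grad g fstar L \<mu> \<rho> \<gamma> "sqrt (\<gamma> / (2 * \<rho>))" "\<mu> * \<gamma> / 2 - sqrt (\<gamma> / (2 * \<rho>))"
      "\<gamma> + sqrt (\<gamma> / (2 * \<rho>))" "\<mu> * \<gamma> / 2"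
    by (intro cnl.intro cnl_axioms.intro P) (use assms in auto)
  show ?thesis by (rule final)
qed

end
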